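(* Let $X$ be a Hilbert space, $B$ a bounded self-adjoint operator on $X$ with $\rho(B)=\|B\|=1$ such that $-1$ is not an eigenvalue of $B$, and $f\in X$ such that $x=Bx+f$ is solvable. Fix $x_0\in X$, let $x_{n+1}=Bx_n+f$, and let $x_*$ be the solution with $Px_*=Px_0$, where $P$ is the orthogonal projection onto $\ker(I-B)$. Let $(f_n)\subset X$ satisfy $\|f_n-f\|\le\delta_n$ with $\delta_n\ge0$ and $(\delta_n)\in L$, and define $\tilde x_0=x_0$, $\tilde x_{n+1}=B\tilde x_n+f_n$. Put $\delta=\|(\delta_n)\|_L$. Then $\|\tilde x_n-x_*\|\le\|x_n-x_*\|+\|\sigma_n\|\,\delta$ for all $n$, and the approximations quasi-converge to $x_*$: for every $\varepsilon>0$ there is $N(\varepsilon)$ such that for all $N(\varepsilon)\le N_-<N_+$ there is $\eta>0$ such that $\|(\delta_n)\|_L<\eta$ implies $\|\tilde x_n-x_*\|<\varepsilon$ for all $n\in[N_-,N_+]$; i.e. $\lim_{n\to\infty,\ \|\sigma_n\|\delta\to0}\|\tilde x_n-x_*\|=0$.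
   Context: $L$ is a Banach space of real sequences $(a_k)_{k\ge0}$ with monotone norm (if $|a_k|\le|b_k|$ for all $k$ then $\|(a_k)\|_L\le\|(b_k)\|_L$), on which each linear functional $\sigma_n((a_k))=a_0+a_1+\dots+a_{n-1}$ ($\sigma_0=0$) is bounded; $\|\sigma_n\|$ denotes its norm as a functional on $L$. $I$ is the identity. *)

theory Defs
  imports "HOL-Analysis.Analysis"
begin

definition seq_banach_space :: "(nat \<Rightarrow> real) set \<Rightarrow> ((nat \<Rightarrow> real) \<Rightarrow> real) \<Rightarrow> bool" where
  "seq_banach_space Ls nL \<longleftrightarrow>
     (\<lambda>k. 0) \<in> Ls \<and>
     (\<forall>a\<in>Ls. \<forall>b\<in>Ls. (\<lambda>k. a k + b k) \<in> Ls) \<and>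
     (\<forall>a\<in>Ls. \<forall>c::real. (\<lambda>k. c * a k) \<in> Ls) \<and>
     (\<forall>a\<in>Ls. nL a \<ge> 0 \<and> (nL a = 0 \<longleftrightarrow> a = (\<lambda>k. 0))) \<and>
     (\<forall>a\<in>Ls. \<forall>c::real. nL (\<lambda>k. c * a k) = \<bar>c\<bar> * nL a) \<and>
     (\<forall>a\<in>Ls. \<forall>b\<in>Ls. nL (\<lambda>k. a k + b k) \<le> nL a + nL b) \<and>
     (\<forall>s::nat \<Rightarrow> (nat \<Rightarrow> real). (\<forall>m. s m \<in> Ls) \<and>
        (\<forall>e>0. \<exists>M. \<forall>m\<ge>M. \<forall>m'\<ge>M. nL (\<lambda>k. s m k - s m' k) < e) \<longrightarrow>
        (\<exists>a\<in>Ls. (\<lambda>m. nL (\<lambda>k. s m k - a k)) \<longlonglongrightarrow> 0))"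

definition monotone_seq_norm :: "(nat \<Rightarrow> real) set \<Rightarrow> ((nat \<Rightarrow> real) \<Rightarrow> real) \<Rightarrow> bool" where
  "monotone_seq_norm Ls nL \<longleftrightarrow>
     (\<forall>a\<in>Ls. \<forall>b\<in>Ls. (\<forall>k. \<bar>a k\<bar> \<le> \<bar>b k\<bar>) \<longrightarrow> nL a \<le> nL b)"

definition sigma :: "nat \<Rightarrow> (nat \<Rightarrow> real) \<Rightarrow> real" where
  "sigma n a = (\<Sum>k<n. a k)"

definition sigmas_bounded :: "(nat \<Rightarrow> real) set \<Rightarrow> ((nat \<Rightarrow> real) \<Rightarrow> real) \<Rightarrow> bool" where
  "sigmas_bounded Ls nL \<longleftrightarrow> (\<forall>n. \<exists>C. \<forall>a\<in>Ls. \<bar>sigma n a\<bar> \<le> C * nL a)"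

definition sigma_norm :: "(nat \<Rightarrow> real) set \<Rightarrow> ((nat \<Rightarrow> real) \<Rightarrow> real) \<Rightarrow> nat \<Rightarrow> real" where
  "sigma_norm Ls nL n = Sup {\<bar>sigma n a\<bar> | a. a \<in> Ls \<and> nL a \<le> 1}"

definition spectrum_op :: "('a::real_normed_vector \<Rightarrow> 'a) \<Rightarrow> real set" where
  "spectrum_op B = {c. \<not> bij (\<lambda>x. c *\<^sub>R x - B x)}"

definition spectral_radius_op :: "('a::real_normed_vector \<Rightarrow> 'a) \<Rightarrow> real" where
  "spectral_radius_op B = Sup (abs ` spectrum_op B)"

definition orth_proj :: "'a::real_inner set \<Rightarrow> 'a \<Rightarrow> 'a" where
  "orth_proj K x = (THE p. p \<in> K \<and> (\<forall>k\<in>K. inner (x - p) k = 0))"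

end

theory Submission
  imports Defs
begin

lemma Bdiff: assumes "bounded_linear B" shows "B (x - y) = B x - B y"
  using bounded_linear.linear[OF assms] by (simp add: linear_diff)

lemma funpow_diff:
  fixes B :: "'a::real_normed_vector \<Rightarrow> 'a"
  assumes "bounded_linear B"
  shows "(B^^n) (u - v) = (B^^n) u - (B^^n) v"
  by (induction n) (simp_all add: Bdiff[OF assms])

lemma funpow_norm_le:
  fixes B :: "'a::real_normed_vector \<Rightarrow> 'a"
  assumes "bounded_linear B" "onorm B = 1"
  shows "norm ((B^^Suc n) u) \<le> norm ((B^^n) u)"
proof -
  have "norm (B ((B^^n) u)) \<le> onorm B * norm ((B^^n) u)" by (rule onorm[OF assms(1)])
  thus ?thesis using assms(2) by simp
qed

lemma funpow_norm_mono:
  fixes B :: "'a::real_normed_vector \<Rightarrow> 'a"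
  assumes "bounded_linear B" "onorm B = 1" "m \<le> n"
  shows "norm ((B^^n) u) \<le> norm ((B^^m) u)"
  using assms(3)
proof (induction n rule: dec_induct)
  case base then show ?case by simp
next
  case (step n) then show ?case using funpow_norm_le[OF assms(1,2), of n u] by linarith
qed

lemma funpow_inner:
  assumes "\<forall>u v. inner (B u) v = inner u (B v)"
  shows "inner ((B^^i) u) ((B^^j) v) = inner u ((B^^(i+j)) v)"
proof (induction i arbitrary: u)
  case 0 then show ?case by simp
next
  case (Suc i)
  have "inner ((B^^Suc i) u) ((B^^j) v) = inner ((B^^i) (B u)) ((B^^j) v)"
    by (simp add: funpow_Suc_right del: funpow.simps)
  also have "\<dots> = inner (B u) ((B^^(i+j)) v)" by (rule Suc.IH)
  also have "\<dots> = inner u (B ((B^^(i+j)) v))" using assms by simp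
  also have "\<dots> = inner u ((B^^(Suc i+j)) v)" by simp
  finally show ?case .
qed

lemma even_conv:
  fixes w :: "'a::{real_inner,complete_space}"
  assumes B_lin: "bounded_linear B" and B_sa: "\<forall>u v. inner (B u) v = inner u (B v)"
    and B_norm: "onorm B = 1"
  shows "\<exists>z. (\<lambda>k. (B^^(2*k)) w) \<longlonglongrightarrow> z"
proof -
  define a where "a k = inner ((B^^k) w) ((B^^k) w)" for k
  have a_eq: "a k = (norm ((B^^k) w))^2" for k by (simp add: a_def power2_norm_eq_inner)
  have "decseq a" unfolding decseq_def a_eq
    using funpow_norm_mono[OF B_lin B_norm] by (simp add: power_mono)
  moreover have "\<forall>i. 0 \<le> a i" using a_eq by simp
  ultimately obtain L where L: "a \<longlonglongrightarrow> L" "\<forall>i. L \<le> a i"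
    using decseq_convergent[of a 0] by blast
  define z where "z k = (B^^(2*k)) w" for k
  have key: "(norm (z n - z m))^2 = a (2*n) + a (2*m) - 2 * a (n+m)" for n m
  proof -
    have "(norm (z n - z m))^2 = inner (z n) (z n) + inner (z m) (z m) - 2 * inner (z n) (z m)"
      by (simp add: power2_norm_eq_inner inner_diff_left inner_diff_right inner_commute)
    moreover have "inner (z n) (z m) = inner w ((B^^(2*n+2*m)) w)"
      unfolding z_def by (rule funpow_inner[OF B_sa])
    moreover have "a (n+m) = inner w ((B^^((n+m)+(n+m))) w)"
      unfolding a_def by (rule funpow_inner[OF B_sa])
    moreover have "(n+m)+(n+m) = 2*n+2*m" by simp
    moreover have "inner (z n) (z n) = a (2*n)" "inner (z m) (z m) = a (2*m)"
      unfolding z_def a_def by simp_all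
    ultimately show ?thesis by simp
  qed
  have "Cauchy z"
  proof (rule CauchyI)
    fix e :: real assume e: "e > 0"
    then have "e^2/4 > 0" by simp
    with L(1) obtain M where M: "\<forall>k\<ge>M. \<bar>a k - L\<bar> < e^2/4"
      unfolding LIMSEQ_def dist_real_def by blast
    show "\<exists>M. \<forall>m\<ge>M. \<forall>n\<ge>M. norm (z m - z n) < e"
    proof (intro exI allI impI)
      fix m n assume "M \<le> m" "M \<le> n"
      then have h: "\<bar>a (2*m) - L\<bar> < e^2/4" "\<bar>a (2*n) - L\<bar> < e^2/4" using M by auto
      have "L \<le> a (m+n)" using L(2) by auto
      then have "(norm (z m - z n))^2 < e^2" using key[of m n] h by linarith
      then show "norm (z m - z n) < e" using e by (simp add: power_less_imp_less_base)
    qed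
  qed
  then show ?thesis unfolding Cauchy_convergent_iff convergent_def z_def by blast
qed

lemma limit_proj:
  fixes w :: "'a::{real_inner,complete_space}"
  assumes B_lin: "bounded_linear B" and B_sa: "\<forall>u v. inner (B u) v = inner u (B v)"
    and not_eig: "\<forall>u. B u = - u \<longrightarrow> u = 0"
    and lim: "(\<lambda>k. (B^^(2*k)) w) \<longlonglongrightarrow> z"
  shows "orth_proj {u. u - B u = 0} w = z"
proof -
  have t1: "(\<lambda>k. B (B ((B^^(2*k)) w))) \<longlonglongrightarrow> B (B z)"
    by (intro bounded_linear.tendsto[OF B_lin] lim)
  have "(\<lambda>k. B (B ((B^^(2*k)) w))) = (\<lambda>k. (B^^(2*Suc k)) w)"
  proof
    fix k
    have "2 * Suc k = Suc (Suc (2*k))" by simp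
    then show "B (B ((B^^(2*k)) w)) = (B^^(2*Suc k)) w" by simp
  qed
  moreover have "(\<lambda>k. (B^^(2*Suc k)) w) \<longlonglongrightarrow> z"
    using LIMSEQ_Suc[OF lim] by simp
  ultimately have BBz: "B (B z) = z" using t1 LIMSEQ_unique by metis
  have "B (z - B z) = - (z - B z)"
    using BBz Bdiff[OF B_lin] by simp
  then have zK: "z - B z = 0" using not_eig by blast
  have orth: "inner (w - z) k = 0" if "k - B k = 0" for k
  proof -
    have Bk: "B k = k" using that by simp
    have fix': "(B^^n) k = k" for n by (induction n) (simp_all add: Bk)
    have "inner ((B^^(2*m)) w) k = inner w k" for m
      using funpow_inner[OF B_sa, of "2*m" w 0 k] fix' by simp
    then have "(\<lambda>m. inner ((B^^(2*m)) w) k) = (\<lambda>m. inner w k)" by simp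
    moreover have "(\<lambda>m. inner ((B^^(2*m)) w) k) \<longlonglongrightarrow> inner z k"
      by (intro tendsto_inner lim tendsto_const)
    ultimately have "inner z k = inner w k" using LIMSEQ_unique tendsto_const by metis
    then show ?thesis by (simp add: inner_diff_left)
  qed
  show ?thesis unfolding orth_proj_def
  proof (rule the_equality)
    show "z \<in> {u. u - B u = 0} \<and> (\<forall>k\<in>{u. u - B u = 0}. inner (w - z) k = 0)"
      using zK orth by auto
  next
    fix p assume p: "p \<in> {u. u - B u = 0} \<and> (\<forall>k\<in>{u. u - B u = 0}. inner (w - p) k = 0)"
    have "B (z - p) = B z - B p" by (rule Bdiff[OF B_lin])
    then have "(z - p) - B (z - p) = (z - B z) - (p - B p)" by (simp add: algebra_simps)
    moreover have "p - B p = 0" using p by simp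
    ultimately have zp: "(z - p) - B (z - p) = 0" using zK by simp
    have "inner (z - p) (z - p) = inner (w - p) (z - p) - inner (w - z) (z - p)"
      by (simp add: inner_diff_left)
    also have "\<dots> = 0" using zp p orth by simp
    finally show "p = z" by simp
  qed
qed

lemma sigma_le:
  assumes L: "seq_banach_space Ls nL" "sigmas_bounded Ls nL" and a: "a \<in> Ls"
  shows "\<bar>sigma n a\<bar> \<le> sigma_norm Ls nL n * nL a"
proof -
  from L(2) obtain C where C: "\<forall>a\<in>Ls. \<bar>sigma n a\<bar> \<le> C * nL a"
    unfolding sigmas_bounded_def by blast
  have nn: "\<forall>a\<in>Ls. nL a \<ge> 0 \<and> (nL a = 0 \<longleftrightarrow> a = (\<lambda>k. 0))"
    and sc: "\<forall>a\<in>Ls. \<forall>c::real. (\<lambda>k. c * a k) \<in> Ls"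
    and hom: "\<forall>a\<in>Ls. \<forall>c::real. nL (\<lambda>k. c * a k) = \<bar>c\<bar> * nL a"
    using L(1) unfolding seq_banach_space_def by auto
  let ?S = "{\<bar>sigma n a\<bar> | a. a \<in> Ls \<and> nL a \<le> 1}"
  have bdd: "bdd_above ?S"
  proof (rule bdd_aboveI[of _ "\<bar>C\<bar>"])
    fix x assume "x \<in> ?S"
    then obtain b where b: "x = \<bar>sigma n b\<bar>" "b \<in> Ls" "nL b \<le> 1" by auto
    have "0 \<le> nL b" using nn b by auto
    then have "C * nL b \<le> \<bar>C\<bar> * nL b" by (intro mult_right_mono) auto
    moreover have "\<bar>C\<bar> * nL b \<le> \<bar>C\<bar>" using mult_left_mono[of "nL b" 1 "\<bar>C\<bar>"] b by simp
    ultimately show "x \<le> \<bar>C\<bar>" using C b by force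
  qed
  show ?thesis
  proof (cases "nL a = 0")
    case True
    then have "a = (\<lambda>k. 0)" using nn a by auto
    then show ?thesis using True by (simp add: sigma_def)
  next
    case False
    then have pos: "nL a > 0" using nn a by force
    define c where "c = 1 / nL a"
    define b where "b = (\<lambda>k. c * a k)"
    have bL: "b \<in> Ls" using sc a b_def by auto
    have "nL b = \<bar>c\<bar> * nL a" using hom a unfolding b_def by blast
    then have nb: "nL b = 1" using pos by (simp add: c_def)
    have sb: "sigma n b = c * sigma n a" unfolding sigma_def b_def by (simp add: sum_distrib_left)
    have "\<bar>sigma n b\<bar> \<in> ?S" using bL nb by auto
    then have "\<bar>sigma n b\<bar> \<le> sigma_norm Ls nL n" unfolding sigma_norm_def
      using bdd by (rule cSup_upper)
    then have "\<bar>sigma n a\<bar> / nL a \<le> sigma_norm Ls nL n" using sb pos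
      by (simp add: c_def abs_mult)
    then show ?thesis using pos by (simp add: divide_le_eq mult.commute)
  qed
qed

theorem theorem1p7:
  fixes B :: "'a::{real_inner, complete_space} \<Rightarrow> 'a"
    and f x0 xs :: 'a
    and x :: "nat \<Rightarrow> 'a"
    and Ls :: "(nat \<Rightarrow> real) set" and nL :: "(nat \<Rightarrow> real) \<Rightarrow> real"
  assumes L: "seq_banach_space Ls nL" "monotone_seq_norm Ls nL" "sigmas_bounded Ls nL"
    and B_lin: "bounded_linear B"
    and B_sa: "\<forall>u v. inner (B u) v = inner u (B v)"
    and B_rho: "spectral_radius_op B = 1"
    and B_norm: "onorm B = 1"
    and not_eig: "\<forall>u. B u = - u \<longrightarrow> u = 0"
    and solvable: "\<exists>u. u = B u + f"
    and x_0: "x 0 = x0"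
    and x_Suc: "\<forall>n. x (Suc n) = B (x n) + f"
    and xs_sol: "xs = B xs + f"
    and xs_proj: "orth_proj {u. u - B u = 0} xs = orth_proj {u. u - B u = 0} x0"
  shows
    "(\<forall>fs :: nat \<Rightarrow> 'a. \<forall>\<delta>s :: nat \<Rightarrow> real. \<forall>xt :: nat \<Rightarrow> 'a.
        (\<forall>n. \<delta>s n \<ge> 0) \<and> \<delta>s \<in> Ls \<and> (\<forall>n. norm (fs n - f) \<le> \<delta>s n) \<and>
        xt 0 = x0 \<and> (\<forall>n. xt (Suc n) = B (xt n) + fs n) \<longrightarrow>
        (\<forall>n. norm (xt n - xs) \<le> norm (x n - xs) + sigma_norm Ls nL n * nL \<delta>s))
   \<and> (\<forall>\<epsilon>>0. \<exists>N. \<forall>Nm Np. N \<le> Nm \<and> Nm < Np \<longrightarrow>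
        (\<exists>\<eta>>0. \<forall>fs :: nat \<Rightarrow> 'a. \<forall>\<delta>s :: nat \<Rightarrow> real. \<forall>xt :: nat \<Rightarrow> 'a.
          (\<forall>n. \<delta>s n \<ge> 0) \<and> \<delta>s \<in> Ls \<and> (\<forall>n. norm (fs n - f) \<le> \<delta>s n) \<and>
          xt 0 = x0 \<and> (\<forall>n. xt (Suc n) = B (xt n) + fs n) \<and> nL \<delta>s < \<eta> \<longrightarrow>
          (\<forall>n. Nm \<le> n \<and> n \<le> Np \<longrightarrow> norm (xt n - xs) < \<epsilon>)))"
proof -
  have Ble: "norm (B v) \<le> norm v" for v using onorm[OF B_lin, of v] B_norm by simp
  have part1: "norm (xt n - xs) \<le> norm (x n - xs) + sigma_norm Ls nL n * nL \<delta>s"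
    if h: "(\<forall>n. \<delta>s n \<ge> 0) \<and> \<delta>s \<in> Ls \<and> (\<forall>n. norm (fs n - f) \<le> \<delta>s n) \<and>
        xt 0 = x0 \<and> (\<forall>n. xt (Suc n) = B (xt n) + fs n)" for fs \<delta>s xt n
  proof -
    have d: "norm (xt n - x n) \<le> sigma n \<delta>s" for n
    proof (induction n)
      case 0 then show ?case using h x_0 by (simp add: sigma_def)
    next
      case (Suc n)
      have "xt (Suc n) - x (Suc n) = B (xt n - x n) + (fs n - f)"
        using h x_Suc Bdiff[OF B_lin] by simp
      then have "norm (xt (Suc n) - x (Suc n)) \<le> norm (B (xt n - x n)) + norm (fs n - f)"
        by (metis norm_triangle_ineq)
      also have "\<dots> \<le> sigma n \<delta>s + \<delta>s n" using Ble[of "xt n - x n"] Suc.IH h[THEN conjunct2, THEN conjunct2, THEN conjunct1, rule_format, of n] by linarith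
      finally show ?case by (simp add: sigma_def)
    qed
    have "sigma n \<delta>s \<le> sigma_norm Ls nL n * nL \<delta>s"
      using sigma_le[OF L(1) L(3), of \<delta>s n] h by simp
    moreover have "norm (xt n - xs) \<le> norm (xt n - x n) + norm (x n - xs)"
      using norm_triangle_ineq[of "xt n - x n" "x n - xs"] by simp
    ultimately show ?thesis using d[of n] by linarith
  qed
  have xdiff: "x n - xs = (B^^n) (x0 - xs)" for n
  proof (induction n)
    case 0 then show ?case using x_0 by simp
  next
    case (Suc n)
    have e: "B xs + f = xs" using xs_sol[symmetric] .
    have "x (Suc n) - xs = (B (x n) + f) - (B xs + f)" by (simp only: x_Suc[rule_format] e)
    also have "\<dots> = B (x n) - B xs" by simp
    also have "\<dots> = B (x n - xs)" by (rule Bdiff[OF B_lin, symmetric])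
    finally have "x (Suc n) - xs = B (x n - xs)" .
    then show ?case using Suc.IH by simp
  qed
  obtain z1 where z1: "(\<lambda>k. (B^^(2*k)) x0) \<longlonglongrightarrow> z1" using even_conv[OF B_lin B_sa B_norm] by blast
  obtain z2 where z2: "(\<lambda>k. (B^^(2*k)) xs) \<longlonglongrightarrow> z2" using even_conv[OF B_lin B_sa B_norm] by blast
  have "z1 = z2" using limit_proj[OF B_lin B_sa not_eig z1] limit_proj[OF B_lin B_sa not_eig z2] xs_proj
    by simp
  then have "(\<lambda>k. (B^^(2*k)) x0 - (B^^(2*k)) xs) \<longlonglongrightarrow> 0"
    using tendsto_diff[OF z1 z2] by simp
  then have ev0: "(\<lambda>k. (B^^(2*k)) (x0 - xs)) \<longlonglongrightarrow> 0"
    by (simp add: funpow_diff[OF B_lin])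
  have xconv: "\<exists>N. \<forall>n\<ge>N. norm (x n - xs) < e" if e: "e > 0" for e
  proof -
    from ev0 e obtain M where M: "\<forall>k\<ge>M. norm ((B^^(2*k)) (x0 - xs)) < e"
      unfolding LIMSEQ_def dist_norm by auto
    show ?thesis
    proof (intro exI allI impI)
      fix n assume "2*M \<le> n"
      then have "M \<le> n div 2" by linarith
      then have "norm ((B^^(2*(n div 2))) (x0 - xs)) < e" using M by blast
      moreover have "norm ((B^^n) (x0 - xs)) \<le> norm ((B^^(2*(n div 2))) (x0 - xs))"
        by (rule funpow_norm_mono[OF B_lin B_norm]) linarith
      ultimately show "norm (x n - xs) < e" using xdiff by simp
    qed
  qed
  have part2: "\<exists>N. \<forall>Nm Np. N \<le> Nm \<and> Nm < Np \<longrightarrow>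
        (\<exists>\<eta>>0. \<forall>fs :: nat \<Rightarrow> 'a. \<forall>\<delta>s :: nat \<Rightarrow> real. \<forall>xt :: nat \<Rightarrow> 'a.
          (\<forall>n. \<delta>s n \<ge> 0) \<and> \<delta>s \<in> Ls \<and> (\<forall>n. norm (fs n - f) \<le> \<delta>s n) \<and>
          xt 0 = x0 \<and> (\<forall>n. xt (Suc n) = B (xt n) + fs n) \<and> nL \<delta>s < \<eta> \<longrightarrow>
          (\<forall>n. Nm \<le> n \<and> n \<le> Np \<longrightarrow> norm (xt n - xs) < \<epsilon>))" if e: "\<epsilon> > 0" for \<epsilon>
  proof -
    obtain N where N: "\<forall>n\<ge>N. norm (x n - xs) < \<epsilon>/2" using xconv[of "\<epsilon>/2"] e by auto
    show ?thesis
    proof (intro exI[of _ N] allI impI)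
      fix Nm Np assume "N \<le> Nm \<and> Nm < Np"
      define S where "S = (\<Sum>n\<le>Np. \<bar>sigma_norm Ls nL n\<bar>) + 1"
      have S0: "S > 0" unfolding S_def by (simp add: sum_nonneg add_nonneg_pos)
      have Sle: "sigma_norm Ls nL n \<le> S" if "n \<le> Np" for n
      proof -
        have "\<bar>sigma_norm Ls nL n\<bar> \<le> (\<Sum>n\<le>Np. \<bar>sigma_norm Ls nL n\<bar>)"
          by (rule member_le_sum) (use that in auto)
        then show ?thesis unfolding S_def by linarith
      qed
      show "\<exists>\<eta>>0. \<forall>fs :: nat \<Rightarrow> 'a. \<forall>\<delta>s :: nat \<Rightarrow> real. \<forall>xt :: nat \<Rightarrow> 'a.
          (\<forall>n. \<delta>s n \<ge> 0) \<and> \<delta>s \<in> Ls \<and> (\<forall>n. norm (fs n - f) \<le> \<delta>s n) \<and>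
          xt 0 = x0 \<and> (\<forall>n. xt (Suc n) = B (xt n) + fs n) \<and> nL \<delta>s < \<eta> \<longrightarrow>
          (\<forall>n. Nm \<le> n \<and> n \<le> Np \<longrightarrow> norm (xt n - xs) < \<epsilon>)"
      proof (intro exI[of _ "\<epsilon>/(2*S)"] conjI allI impI)
        show "\<epsilon>/(2*S) > 0" using e S0 by simp
      next
        fix fs :: "nat \<Rightarrow> 'a" and \<delta>s xt n
        assume h: "(\<forall>n. \<delta>s n \<ge> 0) \<and> \<delta>s \<in> Ls \<and> (\<forall>n. norm (fs n - f) \<le> \<delta>s n) \<and>
          xt 0 = x0 \<and> (\<forall>n. xt (Suc n) = B (xt n) + fs n) \<and> nL \<delta>s < \<epsilon>/(2*S)"
          and n: "Nm \<le> n \<and> n \<le> Np"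
        have nn: "nL \<delta>s \<ge> 0" using L(1) h unfolding seq_banach_space_def by blast
        have "sigma_norm Ls nL n * nL \<delta>s \<le> S * nL \<delta>s"
          using Sle[of n] n nn by (simp add: mult_right_mono)
        also have "\<dots> < S * (\<epsilon>/(2*S))"
          using mult_strict_left_mono[of "nL \<delta>s" "\<epsilon>/(2*S)" S] h S0 by blast
        also have "\<dots> = \<epsilon>/2" using S0 by simp
        finally have a: "sigma_norm Ls nL n * nL \<delta>s < \<epsilon>/2" .
        have b: "norm (x n - xs) < \<epsilon>/2" using N n \<open>N \<le> Nm \<and> Nm < Np\<close> by auto
        have "norm (xt n - xs) \<le> norm (x n - xs) + sigma_norm Ls nL n * nL \<delta>s"
          using part1 h by blast
        then show "norm (xt n - xs) < \<epsilon>" using a b by linarith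
      qed
    qed
  qed
  show ?thesis using part1 part2 by blast
qed

end
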